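(* Fix $n$ and a probability vector $p\in\mathbb R^I$ with positive entries. If $\vartheta^n_p<0$, then the state process $X^n$ of the $n$-th system is transient under every work-conserving stationary Markov scheduling policy. If $\vartheta^n_p=0$, then $X^n$ is not positive recurrent under any work-conserving stationary Markov scheduling policy.
   Context: Network: $\mathcal I=\{1,\dots,I\}$, $\mathcal J=\{1,\dots,J\}$, edges $\mathcal E\subset\mathcal I\times\mathcal J$ with the bipartite graph $\mathcal G=(\mathcal I\cup\mathcal J,\mathcal E)$ a tree; $i\sim j$ iff $(i,j)\in\mathcal E$, $\mathcal J(i)=\{j:i\sim j\}$, $\mathcal I(j)=\{i:i\sim j\}$; $\mathbb R^{\mathcal G}$ (resp. $\mathbb Z^{\mathcal G}_+$) denotes arrays in $\mathbb R^{I\times J}$ (resp. with nonnegative integer entries) vanishing off $\mathcal E$. For each $n\in\mathbb N$: $\lambda^n_i>0$, $\mu^n_{ij}>0$, $N^n_j\in\mathbb N$, with $\lambda^n_i/n\to\lambda_i>0$, $N^n_j/n\to\nu_j>0$, $\mu^n_{ij}\to\mu_{ij}>0$, $\hat\lambda^n_i:=(\lambda^n_i-n\lambda_i)/\sqrt n$, $\hat\mu^n_{ij}:=\sqrt n(\mu^n_{ij}-\mu_{ij})$, $\hat\nu^n_j:=\sqrt n(N^n_j/n-\nu_j)$ convergent to real limits. Complete resource pooling: the LP "minimize $\max_j\sum_i\xi_{ij}$ over nonnegative $\xi\in\mathbb R^{\mathcal G}$ subject to $\sum_j\mu_{ij}\nu_j\xi_{ij}=\lambda_i$ $\forall i$"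 has a unique solution $\xi^*$, with $\sum_i\xi^*_{ij}=1$ $\forall j$ and $\xi^*_{ij}>0$ for $i\sim j$; $z^*_{ij}:=\xi^*_{ij}\nu_j$; $\theta^n_j:=\hat\nu^n_j+\sum_{i\in\mathcal I(j)}(\hat\mu^n_{ij}/\mu^n_{ij})z^*_{ij}$. $\vartheta^n_p$: for a probability vector $p$ with positive entries, the (unique) optimal value of: maximize $\vartheta$ over $(\vartheta,\kappa)\in\mathbb R\times\mathbb R^{\mathcal G}$ subject to $\hat\lambda^n_i\le\sum_{j\in\mathcal J(i)}\mu^n_{ij}\kappa_{ij}-\vartheta p_i$ $\forall i$ and $\sum_{i\in\mathcal I(j)}\kappa_{ij}=\theta^n_j$ $\forall j$. The $n$-th system (no abandonment, infinite buffers): for $x\in\mathbb Z^I_+$ (numbers of customers of each class in system), the work-conserving action set is $\mathcal Z^n(x)=\{z\in\mathbb Z^{\mathcal G}_+: q_i\ge0,\ y_j\ge0,\ q_i\wedge y_j=0\ \forall(i,j)\in\mathcal E\}$, where $q_i=x_i-\sum_jz_{ij}$ and $y_j=N^n_j-\sum_iz_{ij}$. A work-conserving stationary Markov scheduling policy is a map $z:\mathbb Z^I_+\to\mathbb Z^{\mathcal G}_+$ with $z(x)\in\mathcal Z^n(x)$ for all $x$; under it, $X^n$ is the continuous-time Markov chain on $\mathbb Z^I_+$ with generator $\mathcal L^n_zf(x)=\sum_{i}\big(\lambda^n_i(f(x+e_i)-f(x))+\sum_{j\in\mathcal J(i)}\mu^n_{ij}z_{ij}(x)(f(x-e_i)-f(x))\big)$,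 $e_i$ the $i$-th unit vector. *)

theory Defs
  imports "HOL-Analysis.Analysis"
begin

definition bip_adj :: "('i \<times> 'j) set \<Rightarrow> ('i + 'j) \<Rightarrow> ('i + 'j) \<Rightarrow> bool" where
  "bip_adj E u v \<longleftrightarrow> (\<exists>i j. (i, j) \<in> E \<and> ((u = Inl i \<and> v = Inr j) \<or> (u = Inr j \<and> v = Inl i)))"

definition bip_tree :: "('i \<times> 'j) set \<Rightarrow> bool" where
  "bip_tree E \<longleftrightarrow>
     (\<forall>u v. (u, v) \<in> {(a, b). bip_adj E a b}\<^sup>*) \<and>
     \<not> (\<exists>cs :: ('i + 'j) list. length cs \<ge> 3 \<and> distinct cs \<and>
            (\<forall>k. Suc k < length cs \<longrightarrow> bip_adj E (cs ! k) (cs ! Suc k)) \<and>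
            bip_adj E (last cs) (hd cs))"

definition crp_feasible ::
  "('i::finite \<times> 'j::finite) set \<Rightarrow> ('i \<Rightarrow> real) \<Rightarrow> ('i \<Rightarrow> 'j \<Rightarrow> real) \<Rightarrow> ('j \<Rightarrow> real)
   \<Rightarrow> ('i \<Rightarrow> 'j \<Rightarrow> real) \<Rightarrow> bool" where
  "crp_feasible E lam mu nu \<xi> \<longleftrightarrow>
     (\<forall>i j. \<xi> i j \<ge> 0) \<and> (\<forall>i j. (i, j) \<notin> E \<longrightarrow> \<xi> i j = 0) \<and>
     (\<forall>i. (\<Sum>j \<in> {j. (i, j) \<in> E}. mu i j * nu j * \<xi> i j) = lam i)"

definition crp_obj :: "('i::finite \<Rightarrow> 'j::finite \<Rightarrow> real) \<Rightarrow> real" where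
  "crp_obj \<xi> = Max (range (\<lambda>j. \<Sum>i\<in>UNIV. \<xi> i j))"

definition crp_unique_solution ::
  "('i::finite \<times> 'j::finite) set \<Rightarrow> ('i \<Rightarrow> real) \<Rightarrow> ('i \<Rightarrow> 'j \<Rightarrow> real) \<Rightarrow> ('j \<Rightarrow> real)
   \<Rightarrow> ('i \<Rightarrow> 'j \<Rightarrow> real) \<Rightarrow> bool" where
  "crp_unique_solution E lam mu nu \<xi>s \<longleftrightarrow>
     crp_feasible E lam mu nu \<xi>s \<and>
     (\<forall>\<xi>. crp_feasible E lam mu nu \<xi> \<longrightarrow> crp_obj \<xi>s \<le> crp_obj \<xi>) \<and>
     (\<forall>\<xi>. crp_feasible E lam mu nu \<xi> \<and> crp_obj \<xi> = crp_obj \<xi>s \<longrightarrow> \<xi> = \<xi>s) \<and>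
     (\<forall>j. (\<Sum>i\<in>UNIV. \<xi>s i j) = 1) \<and>
     (\<forall>i j. (i, j) \<in> E \<longrightarrow> \<xi>s i j > 0)"

definition lamhat :: "(nat \<Rightarrow> 'i \<Rightarrow> real) \<Rightarrow> ('i \<Rightarrow> real) \<Rightarrow> nat \<Rightarrow> 'i \<Rightarrow> real" where
  "lamhat lam lam0 n i = (lam n i - real n * lam0 i) / sqrt (real n)"

definition muhat :: "(nat \<Rightarrow> 'i \<Rightarrow> 'j \<Rightarrow> real) \<Rightarrow> ('i \<Rightarrow> 'j \<Rightarrow> real) \<Rightarrow> nat \<Rightarrow> 'i \<Rightarrow> 'j \<Rightarrow> real" where
  "muhat mu mu0 n i j = sqrt (real n) * (mu n i j - mu0 i j)"

definition nuhat :: "(nat \<Rightarrow> 'j \<Rightarrow> nat) \<Rightarrow> ('j \<Rightarrow> real) \<Rightarrow> nat \<Rightarrow> 'j \<Rightarrow> real" where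
  "nuhat N nu n j = sqrt (real n) * (real (N n j) / real n - nu j)"

definition theta ::
  "('i::finite \<times> 'j) set \<Rightarrow> (nat \<Rightarrow> 'i \<Rightarrow> 'j \<Rightarrow> real) \<Rightarrow> ('i \<Rightarrow> 'j \<Rightarrow> real) \<Rightarrow> (nat \<Rightarrow> 'j \<Rightarrow> nat)
   \<Rightarrow> ('j \<Rightarrow> real) \<Rightarrow> ('i \<Rightarrow> 'j \<Rightarrow> real) \<Rightarrow> nat \<Rightarrow> 'j \<Rightarrow> real" where
  "theta E mu mu0 N nu \<xi>s n j =
     nuhat N nu n j + (\<Sum>i \<in> {i. (i, j) \<in> E}. (muhat mu mu0 n i j / mu n i j) * (\<xi>s i j * nu j))"

definition vtheta_feasible ::
  "('i::finite \<times> 'j::finite) set \<Rightarrow> (nat \<Rightarrow> 'i \<Rightarrow> real) \<Rightarrow> ('i \<Rightarrow> real) \<Rightarrow> (nat \<Rightarrow> 'i \<Rightarrow> 'j \<Rightarrow> real)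
   \<Rightarrow> ('i \<Rightarrow> 'j \<Rightarrow> real) \<Rightarrow> (nat \<Rightarrow> 'j \<Rightarrow> nat) \<Rightarrow> ('j \<Rightarrow> real) \<Rightarrow> ('i \<Rightarrow> 'j \<Rightarrow> real)
   \<Rightarrow> nat \<Rightarrow> ('i \<Rightarrow> real) \<Rightarrow> real \<Rightarrow> ('i \<Rightarrow> 'j \<Rightarrow> real) \<Rightarrow> bool" where
  "vtheta_feasible E lam lam0 mu mu0 N nu \<xi>s n p vt \<kappa> \<longleftrightarrow>
     (\<forall>i j. (i, j) \<notin> E \<longrightarrow> \<kappa> i j = 0) \<and>
     (\<forall>i. lamhat lam lam0 n i \<le> (\<Sum>j \<in> {j. (i, j) \<in> E}. mu n i j * \<kappa> i j) - vt * p i) \<and>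
     (\<forall>j. (\<Sum>i \<in> {i. (i, j) \<in> E}. \<kappa> i j) = theta E mu mu0 N nu \<xi>s n j)"

definition vtheta_opt_value ::
  "('i::finite \<times> 'j::finite) set \<Rightarrow> (nat \<Rightarrow> 'i \<Rightarrow> real) \<Rightarrow> ('i \<Rightarrow> real) \<Rightarrow> (nat \<Rightarrow> 'i \<Rightarrow> 'j \<Rightarrow> real)
   \<Rightarrow> ('i \<Rightarrow> 'j \<Rightarrow> real) \<Rightarrow> (nat \<Rightarrow> 'j \<Rightarrow> nat) \<Rightarrow> ('j \<Rightarrow> real) \<Rightarrow> ('i \<Rightarrow> 'j \<Rightarrow> real)
   \<Rightarrow> nat \<Rightarrow> ('i \<Rightarrow> real) \<Rightarrow> real \<Rightarrow> bool" where
  "vtheta_opt_value E lam lam0 mu mu0 N nu \<xi>s n p v \<longleftrightarrow>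
     (\<exists>\<kappa>. vtheta_feasible E lam lam0 mu mu0 N nu \<xi>s n p v \<kappa>) \<and>
     (\<forall>vt \<kappa>. vtheta_feasible E lam lam0 mu mu0 N nu \<xi>s n p vt \<kappa> \<longrightarrow> vt \<le> v)"

definition wc_action ::
  "('i::finite \<times> 'j::finite) set \<Rightarrow> ('j \<Rightarrow> nat) \<Rightarrow> ('i \<Rightarrow> nat) \<Rightarrow> ('i \<Rightarrow> 'j \<Rightarrow> nat) \<Rightarrow> bool" where
  "wc_action E Nn x z \<longleftrightarrow>
     (\<forall>i j. (i, j) \<notin> E \<longrightarrow> z i j = 0) \<and>
     (\<forall>i. (\<Sum>j\<in>UNIV. z i j) \<le> x i) \<and>
     (\<forall>j. (\<Sum>i\<in>UNIV. z i j) \<le> Nn j) \<and>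
     (\<forall>i j. (i, j) \<in> E \<longrightarrow> x i - (\<Sum>j'\<in>UNIV. z i j') = 0 \<or> Nn j - (\<Sum>i'\<in>UNIV. z i' j) = 0)"

definition wc_policy ::
  "('i::finite \<times> 'j::finite) set \<Rightarrow> ('j \<Rightarrow> nat) \<Rightarrow> (('i \<Rightarrow> nat) \<Rightarrow> 'i \<Rightarrow> 'j \<Rightarrow> nat) \<Rightarrow> bool" where
  "wc_policy E Nn z \<longleftrightarrow> (\<forall>x. wc_action E Nn x (z x))"

text \<open>The chain jumps from x to x + e_i at rate la i and to
  x - e_i at rate d x i.  Quantities below are computed from the
  embedded jump chain and the (exponential) holding times.\<close>

definition up :: "('i \<Rightarrow> nat) \<Rightarrow> 'i \<Rightarrow> 'i \<Rightarrow> nat" where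
  "up x i = x(i := x i + 1)"

definition down :: "('i \<Rightarrow> nat) \<Rightarrow> 'i \<Rightarrow> 'i \<Rightarrow> nat" where
  "down x i = x(i := x i - 1)"

definition totrate :: "('i::finite \<Rightarrow> real) \<Rightarrow> (('i \<Rightarrow> nat) \<Rightarrow> 'i \<Rightarrow> real) \<Rightarrow> ('i \<Rightarrow> nat) \<Rightarrow> real" where
  "totrate la d x = (\<Sum>i\<in>UNIV. la i) + (\<Sum>i\<in>UNIV. d x i)"

text \<open>fh la d a m y: probability that the jump chain started at y hits
  a for the first time at jump number m.\<close>
primrec fh :: "('i::finite \<Rightarrow> real) \<Rightarrow> (('i \<Rightarrow> nat) \<Rightarrow> 'i \<Rightarrow> real) \<Rightarrow> ('i \<Rightarrow> nat)
               \<Rightarrow> nat \<Rightarrow> ('i \<Rightarrow> nat) \<Rightarrow> ennreal" where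
  "fh la d a 0 y = (if y = a then 1 else 0)"
| "fh la d a (Suc m) y = (if y = a then 0 else
     (\<Sum>i\<in>UNIV. ennreal (la i / totrate la d y) * fh la d a m (up y i)
              + ennreal (d y i / totrate la d y) * fh la d a m (down y i)))"

text \<open>gh la d a m y: expectation of the elapsed (continuous) time on the event
  that the chain started at y first hits a at jump number m.\<close>
primrec gh :: "('i::finite \<Rightarrow> real) \<Rightarrow> (('i \<Rightarrow> nat) \<Rightarrow> 'i \<Rightarrow> real) \<Rightarrow> ('i \<Rightarrow> nat)
               \<Rightarrow> nat \<Rightarrow> ('i \<Rightarrow> nat) \<Rightarrow> ennreal" where
  "gh la d a 0 y = 0"
| "gh la d a (Suc m) y = (if y = a then 0 else
     (\<Sum>i\<in>UNIV. ennreal (la i / totrate la d y) *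
                  (ennreal (1 / totrate la d y) * fh la d a m (up y i) + gh la d a m (up y i))
              + ennreal (d y i / totrate la d y) *
                  (ennreal (1 / totrate la d y) * fh la d a m (down y i) + gh la d a m (down y i))))"

text \<open>Probability of ever returning to a (after leaving it), started at a.\<close>
definition return_prob :: "('i::finite \<Rightarrow> real) \<Rightarrow> (('i \<Rightarrow> nat) \<Rightarrow> 'i \<Rightarrow> real) \<Rightarrow> ('i \<Rightarrow> nat) \<Rightarrow> ennreal" where
  "return_prob la d a =
     (\<Sum>i\<in>UNIV. ennreal (la i / totrate la d a) * (\<Sum>m. fh la d a m (up a i))
              + ennreal (d a i / totrate la d a) * (\<Sum>m. fh la d a m (down a i)))"

text \<open>Expected return time E_a[T_a 1{T_a<\<infinity>}], where
  T_a = inf {t \<ge> J_1. X_t = a}.\<close>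
definition return_time :: "('i::finite \<Rightarrow> real) \<Rightarrow> (('i \<Rightarrow> nat) \<Rightarrow> 'i \<Rightarrow> real) \<Rightarrow> ('i \<Rightarrow> nat) \<Rightarrow> ennreal" where
  "return_time la d a = ennreal (1 / totrate la d a) +
     (\<Sum>i\<in>UNIV. ennreal (la i / totrate la d a) * (\<Sum>m. gh la d a m (up a i))
              + ennreal (d a i / totrate la d a) * (\<Sum>m. gh la d a m (down a i)))"

definition transient_state :: "('i::finite \<Rightarrow> real) \<Rightarrow> (('i \<Rightarrow> nat) \<Rightarrow> 'i \<Rightarrow> real) \<Rightarrow> ('i \<Rightarrow> nat) \<Rightarrow> bool" where
  "transient_state la d a \<longleftrightarrow> return_prob la d a < 1"

definition pos_recurrent_state :: "('i::finite \<Rightarrow> real) \<Rightarrow> (('i \<Rightarrow> nat) \<Rightarrow> 'i \<Rightarrow> real) \<Rightarrow> ('i \<Rightarrow> nat) \<Rightarrow> bool" where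
  "pos_recurrent_state la d a \<longleftrightarrow> return_prob la d a = 1 \<and> return_time la d a < top"

definition dep_rate :: "('i \<Rightarrow> 'j::finite \<Rightarrow> real) \<Rightarrow> (('i \<Rightarrow> nat) \<Rightarrow> 'i \<Rightarrow> 'j \<Rightarrow> nat) \<Rightarrow> ('i \<Rightarrow> nat) \<Rightarrow> 'i \<Rightarrow> real" where
  "dep_rate mun z x i = (\<Sum>j\<in>UNIV. mun i j * real (z x i j))"

end

theory Submission
  imports Defs
begin

definition Pop :: "('i::finite \<Rightarrow> real) \<Rightarrow> (('i \<Rightarrow> nat) \<Rightarrow> 'i \<Rightarrow> real) \<Rightarrow> (('i \<Rightarrow> nat) \<Rightarrow> real) \<Rightarrow> ('i \<Rightarrow> nat) \<Rightarrow> real" where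
  "Pop la d f y = (\<Sum>i\<in>UNIV. (la i / totrate la d y) * f (up y i) + (d y i / totrate la d y) * f (down y i))"

primrec fr :: "('i::finite \<Rightarrow> real) \<Rightarrow> (('i \<Rightarrow> nat) \<Rightarrow> 'i \<Rightarrow> real) \<Rightarrow> ('i \<Rightarrow> nat)
               \<Rightarrow> nat \<Rightarrow> ('i \<Rightarrow> nat) \<Rightarrow> real" where
  "fr la d a 0 y = (if y = a then 1 else 0)"
| "fr la d a (Suc m) y = (if y = a then 0 else Pop la d (fr la d a m) y)"

primrec Kr :: "('i::finite \<Rightarrow> real) \<Rightarrow> (('i \<Rightarrow> nat) \<Rightarrow> 'i \<Rightarrow> real) \<Rightarrow> ('i \<Rightarrow> nat)
               \<Rightarrow> nat \<Rightarrow> ('i \<Rightarrow> nat) \<Rightarrow> real" where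
  "Kr la d a 0 y = (if y = a then 1 else 0)"
| "Kr la d a (Suc m) y = (if y = a then 1 else Pop la d (Kr la d a m) y)"

lemma enn_comb: "0 \<le> q1 \<Longrightarrow> 0 \<le> f1 \<Longrightarrow> 0 \<le> q2 \<Longrightarrow> 0 \<le> f2 \<Longrightarrow>
  ennreal q1 * ennreal f1 + ennreal q2 * ennreal f2 = ennreal (q1 * f1 + q2 * f2)"
  by (subst ennreal_plus) (auto simp: ennreal_mult)

locale mc =
  fixes la :: "'i::finite \<Rightarrow> real" and d :: "('i \<Rightarrow> nat) \<Rightarrow> 'i \<Rightarrow> real"
  assumes la_pos: "\<And>i. la i > 0" and d_nn: "\<And>x i. d x i \<ge> 0"
    and d_zero: "\<And>x i. x i = 0 \<Longrightarrow> d x i = 0"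
begin

lemma T_pos: "totrate la d y > 0"
  unfolding totrate_def
  by (intro add_pos_nonneg sum_pos sum_nonneg) (auto intro: la_pos d_nn)

lemma q_nn: "la i / totrate la d y \<ge> 0" "d y i / totrate la d y \<ge> 0"
  using T_pos[of y] la_pos[of i] d_nn[of y i] by auto

lemma Pop_alt: "Pop la d f y = (\<Sum>i\<in>UNIV. la i * f (up y i) + d y i * f (down y i)) / totrate la d y"
  unfolding Pop_def sum_divide_distrib by (simp add: add_divide_distrib)

lemma Pop_const: "Pop la d (\<lambda>_. c) y = c"
proof -
  have "(\<Sum>i\<in>UNIV. la i * c + d y i * c) = c * totrate la d y"
    unfolding totrate_def by (simp add: sum.distrib sum_distrib_left algebra_simps)
  then show ?thesis using T_pos[of y] by (simp add: Pop_alt)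
qed

lemma Pop_mono:
  assumes "\<And>i. f (up y i) \<le> g (up y i)" "\<And>i. f (down y i) \<le> g (down y i)"
  shows "Pop la d f y \<le> Pop la d g y"
  unfolding Pop_def
  by (intro sum_mono add_mono mult_left_mono assms q_nn)

lemma Pop_lin: "Pop la d (\<lambda>y'. \<alpha> * f y' + \<beta> * g y') y = \<alpha> * Pop la d f y + \<beta> * Pop la d g y"
  unfolding Pop_def by (simp add: sum.distrib sum_distrib_left algebra_simps)

lemma Pop_sum: "Pop la d (\<lambda>y'. \<Sum>k\<in>K. f k y') y = (\<Sum>k\<in>K. Pop la d (f k) y)"
  unfolding Pop_def by (simp add: sum_distrib_left sum.distrib sum.swap[of _ K UNIV])

lemma fr_nn: "fr la d a m y \<ge> 0"
proof (induction m arbitrary: y)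
  case 0 then show ?case by simp
next
  case (Suc m)
  have "Pop la d (\<lambda>_. 0) y \<le> Pop la d (fr la d a m) y"
    by (intro Pop_mono Suc.IH)
  then show ?case by (simp add: Pop_const)
qed

lemma fh_fr: "fh la d a m y = ennreal (fr la d a m y)"
proof (induction m arbitrary: y)
  case 0 then show ?case by simp
next
  case (Suc m)
  show ?case
  proof (cases "y = a")
    case False
    let ?q1 = "\<lambda>i. la i / totrate la d y" and ?q2 = "\<lambda>i. d y i / totrate la d y"
    have "(\<Sum>i\<in>UNIV. ennreal (?q1 i) * fh la d a m (up y i) + ennreal (?q2 i) * fh la d a m (down y i))
       = (\<Sum>i\<in>UNIV. ennreal (?q1 i * fr la d a m (up y i) + ?q2 i * fr la d a m (down y i)))"
      using q_nn fr_nn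
      unfolding Suc.IH by (intro sum.cong refl enn_comb q_nn fr_nn)
    also have "\<dots> = ennreal (Pop la d (fr la d a m) y)"
      unfolding Pop_def using q_nn fr_nn
      by (intro sum_ennreal add_nonneg_nonneg mult_nonneg_nonneg q_nn fr_nn)
    finally show ?thesis using False by simp
  qed simp
qed

lemma Kr_sum: "Kr la d a m y = (\<Sum>k<Suc m. fr la d a k y)"
proof (induction m arbitrary: y)
  case 0 then show ?case by simp
next
  case (Suc m)
  show ?case
  proof (cases "y = a")
    case True
    have "(\<Sum>k<Suc (Suc m). fr la d a k y) = fr la d a 0 y + (\<Sum>k<Suc m. fr la d a (Suc k) y)"
      by (subst sum.lessThan_Suc_shift) simp
    also have "\<dots> = 1" using True by simp
    finally show ?thesis using True by simp
  next
    case False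
    have "(\<Sum>k<Suc (Suc m). fr la d a k y) = fr la d a 0 y + (\<Sum>k<Suc m. fr la d a (Suc k) y)"
      by (subst sum.lessThan_Suc_shift) simp
    also have "\<dots> = (\<Sum>k<Suc m. Pop la d (fr la d a k) y)" using False by simp
    also have "\<dots> = Pop la d (Kr la d a m) y"
    proof -
      have "Kr la d a m = (\<lambda>y'. \<Sum>k<Suc m. fr la d a k y')" using Suc.IH by auto
      then show ?thesis by (simp only: Pop_sum)
    qed
    finally show ?thesis using False by simp
  qed
qed

lemma Kr_le:
  assumes G0: "\<And>y. G y \<ge> 0" and Ga: "G a \<ge> 1"
    and Gs: "\<And>y. y \<noteq> a \<Longrightarrow> Pop la d G y \<le> G y"
  shows "Kr la d a m y \<le> G y"
proof (induction m arbitrary: y)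
  case 0 then show ?case using G0 Ga by simp
next
  case (Suc m)
  show ?case
  proof (cases "y = a")
    case True then show ?thesis using Ga by simp
  next
    case False
    have "Pop la d (Kr la d a m) y \<le> Pop la d G y" by (intro Pop_mono Suc.IH)
    then show ?thesis using False Gs[OF False] by simp
  qed
qed

lemma Kr_le1: "Kr la d a m y \<le> 1"
  using Kr_le[of "\<lambda>_. 1"] by (simp add: Pop_const)

lemma Kr_nn: "Kr la d a m y \<ge> 0"
  using Kr_sum fr_nn by (simp add: sum_nonneg)

end

definition Wf :: "('i::finite \<Rightarrow> real) \<Rightarrow> ('i \<Rightarrow> nat) \<Rightarrow> real" where
  "Wf w x = (\<Sum>i\<in>UNIV. w i * real (x i))"

lemma W_up: "Wf w (up y i) = Wf w y + w i"
proof -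
  have "Wf w (up y i) = (\<Sum>k\<in>UNIV. w k * real (y k) + (if k = i then w i else 0))"
    unfolding Wf_def up_def by (intro sum.cong) (auto simp: algebra_simps)
  then show ?thesis by (simp add: sum.distrib Wf_def)
qed

lemma W_down: "y i \<ge> 1 \<Longrightarrow> Wf w (down y i) = Wf w y - w i"
proof -
  assume h: "y i \<ge> 1"
  have "Wf w (down y i) = (\<Sum>k\<in>UNIV. w k * real (y k) - (if k = i then w i else 0))"
    unfolding Wf_def down_def using h by (intro sum.cong) (auto simp: algebra_simps of_nat_diff)
  then show ?thesis by (simp add: sum_subtractf Wf_def)
qed

lemma W_down0: "y i = 0 \<Longrightarrow> down y i = y"
  unfolding down_def by auto

locale mcw = mc la d for la :: "'i::finite \<Rightarrow> real" and d +
  fixes w :: "'i \<Rightarrow> real" and \<delta> :: real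
  assumes w_nn: "\<And>i. w i \<ge> 0"
    and drift: "\<And>x. (\<Sum>i\<in>UNIV. w i * (la i - d x i)) \<ge> \<delta>"
begin

lemma d_down: "d y i * Wf w (down y i) = d y i * (Wf w y - w i)"
  by (cases "y i = 0") (auto simp: d_zero W_down)

lemma W_down_le: "Wf w (down y i) \<le> Wf w y"
  using w_nn[of i] by (cases "y i = 0") (auto simp: W_down0 W_down)

lemma Pop_W: "Pop la d (Wf w) y = Wf w y + (\<Sum>i\<in>UNIV. w i * (la i - d y i)) / totrate la d y"
proof -
  have "(\<Sum>i\<in>UNIV. la i * Wf w (up y i) + d y i * Wf w (down y i))
      = (\<Sum>i\<in>UNIV. Wf w y * (la i + d y i) + w i * (la i - d y i))"
    by (intro sum.cong refl) (simp add: W_up d_down algebra_simps)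
  also have "\<dots> = Wf w y * totrate la d y + (\<Sum>i\<in>UNIV. w i * (la i - d y i))"
    unfolding totrate_def by (simp add: sum.distrib sum_distrib_left[symmetric] distrib_left)
  finally show ?thesis using T_pos[of y] by (simp add: Pop_alt field_simps)
qed

lemma Pop_W_ge: "\<delta> \<ge> 0 \<Longrightarrow> Pop la d (Wf w) y \<ge> Wf w y"
  using Pop_W[of y] drift[of y] T_pos[of y] by (simp add: divide_nonneg_pos)

lemma Kr_W:
  assumes "\<delta> \<ge> 0" and c: "\<And>i. w i \<le> c"
  shows "Wf w y \<le> Wf w a * Kr la d a m y + (Wf w y + real m * c) * (1 - Kr la d a m y)"
proof (induction m arbitrary: y)
  case 0 then show ?case by simp
next
  case (Suc m)
  show ?case
  proof (cases "y = a")
    case True then show ?thesis by simp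
  next
    case False
    let ?K = "Kr la d a m" and ?B = "Wf w y + real (Suc m) * c"
    have eq: "(\<lambda>y'. Wf w a * ?K y' + ?B * (1 - ?K y')) = (\<lambda>y'. (Wf w a - ?B) * ?K y' + ?B * (\<lambda>_. 1) y')"
      by (auto simp: algebra_simps)
    have "Wf w y \<le> Pop la d (Wf w) y" using Pop_W_ge assms(1) by blast
    also have "\<dots> \<le> Pop la d (\<lambda>y'. Wf w a * ?K y' + (Wf w y' + real m * c) * (1 - ?K y')) y"
      by (intro Pop_mono Suc.IH)
    also have "\<dots> \<le> Pop la d (\<lambda>y'. Wf w a * ?K y' + ?B * (1 - ?K y')) y"
    proof (intro Pop_mono)
      fix i
      have k: "1 - ?K y' \<ge> 0" for y' using Kr_le1[of a m y'] by simp
      show "Wf w a * ?K (up y i) + (Wf w (up y i) + real m * c) * (1 - ?K (up y i))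
          \<le> Wf w a * ?K (up y i) + ?B * (1 - ?K (up y i))"
        using k[of "up y i"] c[of i] by (intro add_left_mono mult_right_mono) (auto simp: W_up algebra_simps)
      show "Wf w a * ?K (down y i) + (Wf w (down y i) + real m * c) * (1 - ?K (down y i))
          \<le> Wf w a * ?K (down y i) + ?B * (1 - ?K (down y i))"
        using k[of "down y i"] c[of i] w_nn[of i] W_down_le[of y i]
        by (intro add_left_mono mult_right_mono) (auto simp: algebra_simps)
    qed
    also have "\<dots> = (Wf w a - ?B) * Pop la d ?K y + ?B"
      unfolding eq Pop_lin Pop_const by simp
    finally show ?thesis using False by (simp add: algebra_simps)
  qed
qed

end

lemma exp_neg_bound: "0 \<le> (t::real) \<Longrightarrow> exp (- t) \<le> 1 - t + t^2"
proof -
  assume t: "0 \<le> t"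
  have "exp (- t) = 1 / exp t" by (simp add: exp_minus field_simps)
  also have "\<dots> \<le> 1 / (1 + t)"
    using t exp_ge_add_one_self[of t] by (intro divide_left_mono) auto
  also have "\<dots> \<le> 1 - t + t^2"
  proof -
    have "1 \<le> (1 + t) * (1 - t + t^2)" using t by (simp add: algebra_simps power2_eq_square power3_eq_cube[symmetric])
    then show ?thesis using t by (simp add: divide_le_eq mult.commute)
  qed
  finally show ?thesis .
qed

context mcw begin

lemma exp_super:
  assumes dpos: "\<delta> > 0" and dD: "\<And>x i. d x i \<le> D"
  obtains \<theta> where "\<theta> > 0" "\<And>y. Pop la d (\<lambda>y'. exp (- \<theta> * Wf w y')) y \<le> exp (- \<theta> * Wf w y)"
proof -
  define c where "c = (\<Sum>i\<in>UNIV. w i)"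
  define C where "C = (\<Sum>i\<in>UNIV. (la i + D) * (w i)^2)"
  define \<theta> where "\<theta> = min (1 / (c + 1)) (\<delta> / (C + 1))"
  have wc: "w i \<le> c" for i unfolding c_def by (rule member_le_sum) (auto simp: w_nn)
  have c0: "c \<ge> 0" using wc[of undefined] w_nn[of undefined] by linarith
  have D0: "D \<ge> 0" using dD[of undefined undefined] d_nn[of undefined undefined] by linarith
  have C0: "C \<ge> 0" unfolding C_def using la_pos D0 by (intro sum_nonneg mult_nonneg_nonneg add_nonneg_nonneg) (auto intro: less_imp_le)
  have th0: "\<theta> > 0" unfolding \<theta>_def using c0 C0 dpos by auto
  have thc: "\<theta> * (c + 1) \<le> 1"
  proof -
    have "\<theta> \<le> 1 / (c + 1)" unfolding \<theta>_def by simp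
    then show ?thesis using c0 by (simp add: pos_le_divide_eq)
  qed
  have thC: "\<theta> * C \<le> \<delta>"
  proof -
    have "\<theta> * C \<le> \<delta> / (C + 1) * C" unfolding \<theta>_def using C0 by (intro mult_right_mono) auto
    also have "\<dots> \<le> \<delta>" using C0 dpos by (simp add: field_simps)
    finally show ?thesis .
  qed
  have t01: "0 \<le> \<theta> * w i" "\<theta> * w i \<le> 1" for i
  proof -
    show "0 \<le> \<theta> * w i" using th0 w_nn[of i] by simp
    have "\<theta> * w i \<le> \<theta> * (c + 1)" using th0 wc[of i] by (intro mult_left_mono) auto
    then show "\<theta> * w i \<le> 1" using thc by linarith
  qed
  show ?thesis
  proof (rule that[OF th0])
    fix y
    let ?F = "\<lambda>y'. exp (- \<theta> * Wf w y')"
    have key: "(\<Sum>i\<in>UNIV. la i * exp (- (\<theta> * w i)) + d y i * exp (\<theta> * w i)) \<le> totrate la d y"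
    proof -
      have "(\<Sum>i\<in>UNIV. la i * exp (- (\<theta> * w i)) + d y i * exp (\<theta> * w i))
          \<le> (\<Sum>i\<in>UNIV. la i * (1 - \<theta> * w i + (\<theta> * w i)^2) + d y i * (1 + \<theta> * w i + (\<theta> * w i)^2))"
        using la_pos d_nn t01 exp_neg_bound exp_bound
        by (intro sum_mono add_mono mult_left_mono) (auto intro: less_imp_le)
      also have "\<dots> = totrate la d y - \<theta> * (\<Sum>i\<in>UNIV. w i * (la i - d y i))
                        + \<theta>^2 * (\<Sum>i\<in>UNIV. (la i + d y i) * (w i)^2)"
        unfolding totrate_def
        by (simp add: sum.distrib sum_distrib_left sum_subtractf algebra_simps power2_eq_square)
      also have "\<dots> \<le> totrate la d y - \<theta> * \<delta> + \<theta>^2 * C"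
      proof -
        have "\<theta> * \<delta> \<le> \<theta> * (\<Sum>i\<in>UNIV. w i * (la i - d y i))"
          using drift[of y] th0 by (intro mult_left_mono) auto
        moreover have "(\<Sum>i\<in>UNIV. (la i + d y i) * (w i)^2) \<le> C"
          unfolding C_def using dD by (intro sum_mono mult_right_mono) auto
        then have "\<theta>^2 * (\<Sum>i\<in>UNIV. (la i + d y i) * (w i)^2) \<le> \<theta>^2 * C"
          by (intro mult_left_mono) auto
        ultimately show ?thesis by linarith
      qed
      also have "\<dots> \<le> totrate la d y"
      proof -
        have "\<theta>^2 * C = \<theta> * (\<theta> * C)" by (simp add: power2_eq_square)
        also have "\<dots> \<le> \<theta> * \<delta>" using thC th0 by (intro mult_left_mono) auto
        finally show ?thesis by linarith
      qed
      finally show ?thesis .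
    qed
    have "Pop la d ?F y = (\<Sum>i\<in>UNIV. la i * ?F (up y i) + d y i * ?F (down y i)) / totrate la d y"
      by (rule Pop_alt)
    also have "(\<Sum>i\<in>UNIV. la i * ?F (up y i) + d y i * ?F (down y i))
        = ?F y * (\<Sum>i\<in>UNIV. la i * exp (- (\<theta> * w i)) + d y i * exp (\<theta> * w i))"
    proof -
      have "d y i * ?F (down y i) = d y i * (?F y * exp (\<theta> * w i))" for i
        by (cases "y i = 0") (auto simp: d_zero W_down algebra_simps exp_add[symmetric])
      then show ?thesis
        by (simp add: sum_distrib_left W_up algebra_simps exp_add[symmetric] exp_diff)
    qed
    also have "?F y * (\<Sum>i\<in>UNIV. la i * exp (- (\<theta> * w i)) + d y i * exp (\<theta> * w i)) / totrate la d y \<le> ?F y"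
      using key T_pos[of y] by (simp add: divide_le_eq)
    finally show "Pop la d ?F y \<le> ?F y" .
  qed
qed

end

primrec gr :: "('i::finite \<Rightarrow> real) \<Rightarrow> (('i \<Rightarrow> nat) \<Rightarrow> 'i \<Rightarrow> real) \<Rightarrow> ('i \<Rightarrow> nat)
               \<Rightarrow> nat \<Rightarrow> ('i \<Rightarrow> nat) \<Rightarrow> real" where
  "gr la d a 0 y = 0"
| "gr la d a (Suc m) y = (if y = a then 0 else
      Pop la d (\<lambda>y'. fr la d a m y' / totrate la d y + gr la d a m y') y)"

lemma enn_comb2: "0 \<le> a \<Longrightarrow> 0 \<le> b \<Longrightarrow> 0 \<le> c \<Longrightarrow> ennreal a * ennreal b + ennreal c = ennreal (b / (1/a) + c)"
  by (subst ennreal_plus) (auto simp: ennreal_mult mult.commute)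

context mc begin

lemma Pop_scale: "Pop la d (\<lambda>y'. \<alpha> * f y') y = \<alpha> * Pop la d f y"
  unfolding Pop_def by (simp add: sum_distrib_left algebra_simps)

lemma gr_nn: "gr la d a m y \<ge> 0"
proof (induction m arbitrary: y)
  case 0 then show ?case by simp
next
  case (Suc m)
  have "Pop la d (\<lambda>_. 0) y \<le> Pop la d (\<lambda>y'. fr la d a m y' / totrate la d y + gr la d a m y') y"
    using fr_nn Suc.IH T_pos[of y] by (intro Pop_mono) (auto intro!: add_nonneg_nonneg divide_nonneg_pos)
  then show ?case by (simp add: Pop_const)
qed

lemma gh_gr: "gh la d a m y = ennreal (gr la d a m y)"
proof (induction m arbitrary: y)
  case 0 then show ?case by simp
next
  case (Suc m)
  show ?case
  proof (cases "y = a")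
    case False
    let ?q1 = "\<lambda>i. la i / totrate la d y" and ?q2 = "\<lambda>i. d y i / totrate la d y"
    let ?h = "\<lambda>y'. fr la d a m y' / totrate la d y + gr la d a m y'"
    have h0: "?h y' \<ge> 0" for y' using fr_nn gr_nn T_pos[of y] by (auto intro!: add_nonneg_nonneg divide_nonneg_pos)
    have e: "ennreal (1 / totrate la d y) * fh la d a m y' + gh la d a m y' = ennreal (?h y')" for y'
      unfolding fh_fr Suc.IH using T_pos[of y] fr_nn gr_nn
      by (subst enn_comb2) auto
    have "(\<Sum>i\<in>UNIV. ennreal (?q1 i) * (ennreal (1 / totrate la d y) * fh la d a m (up y i) + gh la d a m (up y i))
          + ennreal (?q2 i) * (ennreal (1 / totrate la d y) * fh la d a m (down y i) + gh la d a m (down y i)))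
       = (\<Sum>i\<in>UNIV. ennreal (?q1 i * ?h (up y i) + ?q2 i * ?h (down y i)))"
      unfolding e by (intro sum.cong refl enn_comb q_nn h0)
    also have "\<dots> = ennreal (Pop la d ?h y)"
      unfolding Pop_def using q_nn h0
      by (intro sum_ennreal add_nonneg_nonneg mult_nonneg_nonneg q_nn h0)
    finally show ?thesis using False by simp
  qed simp
qed

lemma gr_ge:
  assumes R: "\<And>y. totrate la d y \<le> R"
  shows "real m / R * fr la d a m y \<le> gr la d a m y"
proof (induction m arbitrary: y)
  case 0 then show ?case by simp
next
  case (Suc m)
  show ?case
  proof (cases "y = a")
    case False
    have R0: "R > 0" using R[of y] T_pos[of y] by linarith
    have "real (Suc m) / R * fr la d a (Suc m) y = Pop la d (\<lambda>y'. real (Suc m) / R * fr la d a m y') y"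
      using False Pop_scale[of "real (Suc m) / R" "fr la d a m" y] by simp
    also have "\<dots> \<le> Pop la d (\<lambda>y'. fr la d a m y' / totrate la d y + gr la d a m y') y"
    proof (intro Pop_mono)
      have k: "real (Suc m) / R * fr la d a m y' \<le> fr la d a m y' / totrate la d y + gr la d a m y'" for y'
      proof -
        have "fr la d a m y' / R \<le> fr la d a m y' / totrate la d y"
          using fr_nn R[of y] T_pos[of y] by (intro divide_left_mono) auto
        moreover have "real (Suc m) / R * fr la d a m y' = fr la d a m y' / R + real m / R * fr la d a m y'"
          by (simp add: algebra_simps add_divide_distrib)
        ultimately show ?thesis using Suc.IH[of y'] by linarith
      qed
      show "\<And>i. real (Suc m) / R * fr la d a m (up y i) \<le> fr la d a m (up y i) / totrate la d y + gr la d a m (up y i)"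
        by (rule k)
      show "\<And>i. real (Suc m) / R * fr la d a m (down y i) \<le> fr la d a m (down y i) / totrate la d y + gr la d a m (down y i)"
        by (rule k)
    qed
    finally show ?thesis using False by simp
  qed simp
qed

definition Sr :: "('i \<Rightarrow> nat) \<Rightarrow> ('i \<Rightarrow> nat) \<Rightarrow> real" where
  "Sr a y = (\<Sum>m. fr la d a m y)"

lemma S_bound:
  assumes G0: "\<And>y. G y \<ge> 0" and Ga: "G a \<ge> 1"
    and Gs: "\<And>y. y \<noteq> a \<Longrightarrow> Pop la d G y \<le> G y"
  shows "summable (\<lambda>m. fr la d a m y)" "Sr a y \<le> G y"
proof -
  have ps: "(\<Sum>k<n. fr la d a k y) \<le> G y" for n
  proof -
    have "(\<Sum>k<n. fr la d a k y) \<le> (\<Sum>k<Suc n. fr la d a k y)" by (simp add: fr_nn)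
    also have "\<dots> = Kr la d a n y" by (simp add: Kr_sum)
    also have "\<dots> \<le> G y" by (rule Kr_le[OF G0 Ga Gs])
    finally show ?thesis .
  qed
  show s: "summable (\<lambda>m. fr la d a m y)" by (rule summableI_nonneg_bounded[OF fr_nn ps])
  show "Sr a y \<le> G y" unfolding Sr_def by (rule suminf_le_const[OF s ps])
qed

lemma S_summable: "summable (\<lambda>m. fr la d a m y)"
  using S_bound(1)[of "\<lambda>_. 1"] by (simp add: Pop_const)

lemma S_le1: "Sr a y \<le> 1"
  using S_bound(2)[of "\<lambda>_. 1"] by (simp add: Pop_const)

lemma S_nn: "Sr a y \<ge> 0"
  unfolding Sr_def by (intro suminf_nonneg S_summable fr_nn)

lemma fh_suminf: "(\<Sum>m. fh la d a m y) = ennreal (Sr a y)"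
  unfolding fh_fr Sr_def by (intro suminf_ennreal2 fr_nn S_summable)

lemma return_prob_eq: "return_prob la d a = ennreal (Pop la d (Sr a) a)"
proof -
  have "return_prob la d a = (\<Sum>i\<in>UNIV. ennreal (la i / totrate la d a * Sr a (up a i)
                                   + d a i / totrate la d a * Sr a (down a i)))"
    unfolding return_prob_def fh_suminf by (intro sum.cong refl enn_comb q_nn S_nn)
  also have "\<dots> = ennreal (Pop la d (Sr a) a)"
    unfolding Pop_def by (intro sum_ennreal add_nonneg_nonneg mult_nonneg_nonneg q_nn S_nn)
  finally show ?thesis .
qed

end


context mcw begin

lemma transient_thm:
  assumes dpos: "\<delta> > 0" and dD: "\<And>x i. d x i \<le> D" and i0: "w i0 > 0"
  shows "transient_state la d a"
proof -
  obtain \<theta> where th0: "\<theta> > 0" and sup: "\<And>y. Pop la d (\<lambda>y'. exp (- \<theta> * Wf w y')) y \<le> exp (- \<theta> * Wf w y)"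
    using exp_super[OF dpos dD] by blast
  define k where "k = exp (- \<theta> * Wf w a)"
  have k0: "k > 0" unfolding k_def by simp
  define F where "F y = (1 / k) * exp (- \<theta> * Wf w y)" for y
  define G where "G y = min 1 (F y)" for y
  have PF: "Pop la d F y \<le> F y" for y
  proof -
    have "Pop la d F y = (1 / k) * Pop la d (\<lambda>y'. exp (- \<theta> * Wf w y')) y"
      unfolding F_def by (rule Pop_scale)
    also have "\<dots> \<le> (1 / k) * exp (- \<theta> * Wf w y)" using sup[of y] k0 by (intro mult_left_mono) auto
    finally show ?thesis unfolding F_def .
  qed
  have PG: "Pop la d G y \<le> G y" for y
  proof -
    have "Pop la d G y \<le> Pop la d (\<lambda>_. 1) y" by (intro Pop_mono) (auto simp: G_def)
    moreover have "Pop la d G y \<le> Pop la d F y" by (intro Pop_mono) (auto simp: G_def)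
    ultimately show ?thesis using PF[of y] by (simp add: G_def Pop_const)
  qed
  have G0: "G y \<ge> 0" for y unfolding G_def F_def using k0 by simp
  have Ga: "G a \<ge> 1" unfolding G_def F_def k_def by simp
  have SG: "Sr a y \<le> G y" for y by (rule S_bound(2)[OF G0 Ga PG])
  have Fup: "F (up a i0) = exp (- (\<theta> * w i0))"
    unfolding F_def k_def W_up by (simp add: algebra_simps exp_add exp_diff exp_minus field_simps)
  have Fup1: "F (up a i0) < 1" unfolding Fup using th0 i0 by simp
  have "Pop la d (Sr a) a \<le> Pop la d G a" by (intro Pop_mono SG)
  also have "Pop la d G a < Pop la d (\<lambda>_. 1) a"
    unfolding Pop_def
  proof (rule sum_strict_mono_ex1)
    show "\<forall>i\<in>UNIV. la i / totrate la d a * G (up a i) + d a i / totrate la d a * G (down a i)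
        \<le> la i / totrate la d a * 1 + d a i / totrate la d a * 1"
    proof
      fix i
      have "G y \<le> 1" for y by (simp add: G_def)
      then show "la i / totrate la d a * G (up a i) + d a i / totrate la d a * G (down a i)
        \<le> la i / totrate la d a * 1 + d a i / totrate la d a * 1"
        by (intro add_mono mult_left_mono q_nn)
    qed
    have q: "la i0 / totrate la d a > 0" using la_pos[of i0] T_pos[of a] by simp
    have "la i0 / totrate la d a * G (up a i0) < la i0 / totrate la d a * 1"
      using q Fup1 by (intro mult_strict_left_mono) (auto simp: G_def)
    moreover have "d a i0 / totrate la d a * G (down a i0) \<le> d a i0 / totrate la d a * 1"
      by (intro mult_left_mono q_nn) (simp add: G_def)
    ultimately show "\<exists>i\<in>UNIV. la i / totrate la d a * G (up a i) + d a i / totrate la d a * G (down a i)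
        < la i / totrate la d a * 1 + d a i / totrate la d a * 1"
      by (intro bexI[of _ i0] UNIV_I add_less_le_mono)
  qed simp
  also have "\<dots> = 1" by (rule Pop_const)
  finally have "Pop la d (Sr a) a < 1" .
  then show ?thesis unfolding transient_state_def return_prob_eq by simp
qed

lemma notpos_thm:
  assumes dnn: "\<delta> \<ge> 0" and dD: "\<And>x i. d x i \<le> D" and i0: "w i0 > 0"
  shows "\<not> pos_recurrent_state la d a"
proof
  assume "pos_recurrent_state la d a"
  then have pr: "return_prob la d a = 1" and rt: "return_time la d a < top"
    unfolding pos_recurrent_state_def by auto
  define y0 where "y0 = up a i0"
  define R where "R = (\<Sum>i\<in>UNIV. la i) + real (card (UNIV :: 'i set)) * D"
  have TR: "totrate la d y \<le> R" for y
  proof -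
    have "(\<Sum>i\<in>UNIV. d y i) \<le> real (card (UNIV :: 'i set)) * D"
      using sum_bounded_above[of UNIV "d y" D] dD by auto
    then show ?thesis unfolding totrate_def R_def by simp
  qed
  have R0: "R > 0" using TR[of a] T_pos[of a] by linarith
  have q0: "la i0 / totrate la d a > 0" using la_pos[of i0] T_pos[of a] by simp
  have P1: "Pop la d (Sr a) a = 1" using pr unfolding return_prob_eq by simp
  have "Pop la d (\<lambda>y'. (-1) * Sr a y' + 1 * (\<lambda>_. 1) y') a = 0"
    unfolding Pop_lin Pop_const P1 by simp
  then have "(\<Sum>i\<in>UNIV. la i / totrate la d a * (1 - Sr a (up a i)) + d a i / totrate la d a * (1 - Sr a (down a i))) = 0"
    unfolding Pop_def by simp
  moreover have nn: "\<forall>i\<in>UNIV. 0 \<le> la i / totrate la d a * (1 - Sr a (up a i)) + d a i / totrate la d a * (1 - Sr a (down a i))"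
  proof
    fix i
    have "0 \<le> 1 - Sr a y" for y using S_le1[of a y] by simp
    then show "0 \<le> la i / totrate la d a * (1 - Sr a (up a i)) + d a i / totrate la d a * (1 - Sr a (down a i))"
      by (intro add_nonneg_nonneg mult_nonneg_nonneg q_nn)
  qed
  ultimately have "la i0 / totrate la d a * (1 - Sr a (up a i0)) + d a i0 / totrate la d a * (1 - Sr a (down a i0)) = 0"
    by (simp add: sum_nonneg_eq_0_iff)
  moreover have "0 \<le> d a i0 / totrate la d a * (1 - Sr a (down a i0))"
    using S_le1[of a "down a i0"] by (intro mult_nonneg_nonneg q_nn) simp
  moreover have "0 \<le> la i0 / totrate la d a * (1 - Sr a (up a i0))"
    using S_le1[of a "up a i0"] by (intro mult_nonneg_nonneg q_nn) simp
  ultimately have "la i0 / totrate la d a * (1 - Sr a y0) = 0" unfolding y0_def by linarith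
  then have S1: "Sr a y0 = 1" using q0 by (metis less_irrefl mult_eq_0_iff right_minus_eq)
  have "ennreal (la i0 / totrate la d a) * (\<Sum>m. gh la d a m y0) \<le> return_time la d a"
  proof -
    let ?t = "\<lambda>i. ennreal (la i / totrate la d a) * (\<Sum>m. gh la d a m (up a i))
              + ennreal (d a i / totrate la d a) * (\<Sum>m. gh la d a m (down a i))"
    have "ennreal (la i0 / totrate la d a) * (\<Sum>m. gh la d a m y0) \<le> ?t i0"
      unfolding y0_def by simp
    also have "\<dots> \<le> (\<Sum>i\<in>UNIV. ?t i)" by (rule member_le_sum) auto
    also have "\<dots> \<le> return_time la d a" unfolding return_time_def by simp
    finally show ?thesis .
  qed
  with rt have "ennreal (la i0 / totrate la d a) * (\<Sum>m. gh la d a m y0) \<noteq> top" by auto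
  then have "(\<Sum>m. ennreal (gr la d a m y0)) \<noteq> top"
    using q0 unfolding gh_gr by (auto simp: ennreal_mult_eq_top_iff)
  then have sg: "summable (\<lambda>m. gr la d a m y0)" by (intro summable_suminf_not_top gr_nn)
  have sh: "summable (\<lambda>m. real m * fr la d a m y0)"
  proof (rule summable_comparison_test'[of "\<lambda>m. R * gr la d a m y0" 0])
    show "summable (\<lambda>m. R * gr la d a m y0)" using sg by (rule summable_mult)
    fix m :: nat
    have "real m / R * fr la d a m y0 \<le> gr la d a m y0" by (rule gr_ge[OF TR])
    then have "real m * fr la d a m y0 \<le> R * gr la d a m y0" using R0 by (simp add: field_simps)
    then show "norm (real m * fr la d a m y0) \<le> R * gr la d a m y0" using fr_nn by simp
  qed
  have sf: "summable (\<lambda>m. fr la d a m y0)" by (rule S_summable)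
  define K where "K m = Kr la d a m y0" for m
  have Klim: "K \<longlonglongrightarrow> 1"
  proof -
    have "(\<lambda>n. \<Sum>k<n. fr la d a k y0) \<longlonglongrightarrow> Sr a y0" unfolding Sr_def by (rule summable_LIMSEQ[OF sf])
    then have "(\<lambda>n. \<Sum>k<Suc n. fr la d a k y0) \<longlonglongrightarrow> Sr a y0" by (rule LIMSEQ_Suc)
    then show ?thesis unfolding K_def Kr_sum S1 .
  qed
  define E where "E = (\<Sum>m. real m * fr la d a m y0)"
  have tail: "1 - K m = (\<Sum>n. fr la d a (n + Suc m) y0)" for m
    using suminf_split_initial_segment[OF sf, of "Suc m"] S1 unfolding K_def Kr_sum Sr_def by simp
  have hb: "real m * (1 - K m) \<le> E - (\<Sum>k<Suc m. real k * fr la d a k y0)" for m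
  proof -
    have sft: "summable (\<lambda>n. fr la d a (n + Suc m) y0)" using sf by (rule summable_ignore_initial_segment)
    have sht: "summable (\<lambda>n. real (n + Suc m) * fr la d a (n + Suc m) y0)"
      using summable_ignore_initial_segment[OF sh, of "Suc m"] .
    have "real m * (1 - K m) = (\<Sum>n. real m * fr la d a (n + Suc m) y0)"
      unfolding tail by (rule suminf_mult[OF sft, symmetric])
    also have "\<dots> \<le> (\<Sum>n. real (n + Suc m) * fr la d a (n + Suc m) y0)"
      by (intro suminf_le summable_mult sft sht mult_right_mono fr_nn) auto
    also have "\<dots> = E - (\<Sum>k<Suc m. real k * fr la d a k y0)"
      using suminf_split_initial_segment[OF sh, of "Suc m"] unfolding E_def by simp
    finally show ?thesis .
  qed
  have hlim: "(\<lambda>m. real m * (1 - K m)) \<longlonglongrightarrow> 0"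
  proof (rule real_tendsto_sandwich)
    show "\<forall>\<^sub>F m in sequentially. 0 \<le> real m * (1 - K m)"
      using Kr_le1 by (auto simp: K_def)
    show "\<forall>\<^sub>F m in sequentially. real m * (1 - K m) \<le> E - (\<Sum>k<Suc m. real k * fr la d a k y0)"
      using hb by auto
    show "(\<lambda>m. 0) \<longlonglongrightarrow> (0::real)" by simp
    have "(\<lambda>n. \<Sum>k<n. real k * fr la d a k y0) \<longlonglongrightarrow> E" unfolding E_def by (rule summable_LIMSEQ[OF sh])
    then have "(\<lambda>n. \<Sum>k<Suc n. real k * fr la d a k y0) \<longlonglongrightarrow> E" by (rule LIMSEQ_Suc)
    then have "(\<lambda>n. E - (\<Sum>k<Suc n. real k * fr la d a k y0)) \<longlonglongrightarrow> E - E" by (intro tendsto_diff tendsto_const)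
    then show "(\<lambda>n. E - (\<Sum>k<Suc n. real k * fr la d a k y0)) \<longlonglongrightarrow> 0" by simp
  qed
  \<comment> \<open>the submartingale inequality\<close>
  define c where "c = (\<Sum>i\<in>UNIV. w i)"
  have wc: "w i \<le> c" for i unfolding c_def by (rule member_le_sum) (auto simp: w_nn)
  have ineq: "w i0 * K m \<le> c * (real m * (1 - K m))" for m
  proof -
    have "Wf w y0 \<le> Wf w a * K m + (Wf w y0 + real m * c) * (1 - K m)"
      unfolding K_def by (rule Kr_W[OF dnn wc])
    then show ?thesis unfolding y0_def W_up by (simp add: algebra_simps)
  qed
  have "w i0 * 1 \<le> c * 0"
    by (rule LIMSEQ_le[OF tendsto_mult[OF tendsto_const Klim] tendsto_mult[OF tendsto_const hlim]])
       (use ineq in auto)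
  then show False using i0 by simp
qed

end

lemma sep_lemma:
  fixes A :: "'k set" and g :: "'k \<Rightarrow> 'i::finite \<Rightarrow> real" and p :: "'i \<Rightarrow> real" and v :: real
    and cmb :: "real \<Rightarrow> 'k \<Rightarrow> 'k \<Rightarrow> 'k"
  assumes cmbA: "\<And>k1 k2 u. k1 \<in> A \<Longrightarrow> k2 \<in> A \<Longrightarrow> 0 \<le> u \<Longrightarrow> u \<le> 1 \<Longrightarrow> cmb u k1 k2 \<in> A"
    and cmbg: "\<And>k1 k2 u i. k1 \<in> A \<Longrightarrow> k2 \<in> A \<Longrightarrow> 0 \<le> u \<Longrightarrow> u \<le> 1 \<Longrightarrow>
                  g (cmb u k1 k2) i = u * g k1 i + (1 - u) * g k2 i"
    and ne: "kz \<in> A"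
    and opt: "\<And>vt k. k \<in> A \<Longrightarrow> (\<forall>i. vt * p i \<le> g k i) \<Longrightarrow> vt \<le> v"
    and ppos: "\<And>i. p i > 0"
  shows "\<exists>w. (\<forall>i. w i \<ge> 0) \<and> (\<exists>i. w i > 0) \<and> (\<forall>k\<in>A. (\<Sum>i\<in>UNIV. w i * g k i) \<le> v * (\<Sum>i\<in>UNIV. w i * p i))"
proof -
  define S :: "(real^'i) set" where
    "S = {x. \<exists>k c. k \<in> A \<and> (\<forall>i. c $ i > v * p i) \<and> x = (\<chi> i. g k i - c $ i)}"
  have cS: "convex S"
    unfolding convex_def
  proof (intro ballI allI impI)
    fix x y and u u' :: real assume xS: "x \<in> S" and yS: "y \<in> S" and u: "0 \<le> u" "0 \<le> u'" "u + u' = 1"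
    obtain k1 c1 where k1: "k1 \<in> A" "\<forall>i. c1 $ i > v * p i" "x = (\<chi> i. g k1 i - c1 $ i)" using xS S_def by auto
    obtain k2 c2 where k2: "k2 \<in> A" "\<forall>i. c2 $ i > v * p i" "y = (\<chi> i. g k2 i - c2 $ i)" using yS S_def by auto
    have u': "u' = 1 - u" "u \<le> 1" using u by auto
    let ?c = "u *\<^sub>R c1 + u' *\<^sub>R c2"
    have cg: "?c $ i > v * p i" for i
    proof (cases "u = 0")
      case True then show ?thesis using k2(2) u' by simp
    next
      case False
      then have "u * c1 $ i > u * (v * p i)" using k1(2) u by (intro mult_strict_left_mono) auto
      moreover have "u' * c2 $ i \<ge> u' * (v * p i)" using k2(2)[rule_format, of i] u by (intro mult_left_mono) auto
      ultimately have "u * c1 $ i + u' * c2 $ i > (u + u') * (v * p i)" by (simp add: algebra_simps)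
      then show ?thesis using u by simp
    qed
    have "u *\<^sub>R x + u' *\<^sub>R y = (\<chi> i. g (cmb u k1 k2) i - ?c $ i)"
      unfolding k1(3) k2(3) vec_eq_iff
    proof (intro allI)
      fix i
      have e: "g (cmb u k1 k2) i = u * g k1 i + (1 - u) * g k2 i" by (rule cmbg[OF k1(1) k2(1) u(1) u'(2)])
      show "(u *\<^sub>R (\<chi> i. g k1 i - c1 $ i) + u' *\<^sub>R (\<chi> i. g k2 i - c2 $ i)) $ i =
            (\<chi> i. g (cmb u k1 k2) i - (u *\<^sub>R c1 + u' *\<^sub>R c2) $ i) $ i"
      proof -
        have e': "g (cmb u k1 k2) i = u * g k1 i + g k2 i - u * g k2 i" using e by (simp add: algebra_simps)
        show ?thesis by (simp add: e' u'(1) algebra_simps)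
      qed
    qed
    then show "u *\<^sub>R x + u' *\<^sub>R y \<in> S"
      unfolding S_def using cmbA[OF k1(1) k2(1) u(1) u'(2)] cg by blast
  qed
  have z: "0 \<notin> S"
  proof
    assume "0 \<in> S"
    then obtain k c where k: "k \<in> A" "\<forall>i. c $ i > v * p i" "0 = (\<chi> i. g k i - c $ i)"
      unfolding S_def by auto
    have gk: "g k i > v * p i" for i using k(2,3) by (auto simp: vec_eq_iff)
    define \<epsilon> where "\<epsilon> = Min (range (\<lambda>i. (g k i - v * p i) / p i))"
    have e0: "\<epsilon> > 0" unfolding \<epsilon>_def using gk ppos by (auto simp: Min_gr_iff)
    have "\<forall>i. (v + \<epsilon>) * p i \<le> g k i"
    proof
      fix i
      have "\<epsilon> \<le> (g k i - v * p i) / p i" unfolding \<epsilon>_def by (rule Min_le) auto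
      then show "(v + \<epsilon>) * p i \<le> g k i" using ppos[of i] by (simp add: pos_le_divide_eq algebra_simps)
    qed
    then have "v + \<epsilon> \<le> v" by (rule opt[OF k(1)])
    then show False using e0 by simp
  qed
  obtain a where a0: "a \<noteq> 0" and aS: "\<forall>x\<in>S. 0 \<le> inner a x"
    using separating_hyperplane_set_0[OF cS z] by blast
  have mem: "(\<chi> i. g k i - c $ i) \<in> S" if "k \<in> A" "\<forall>i. c $ i > v * p i" for k c
    unfolding S_def using that by blast
  have ineq: "0 \<le> (\<Sum>i\<in>UNIV. a $ i * (g k i - c $ i))" if "k \<in> A" "\<forall>i. c $ i > v * p i" for k c
    using bspec[OF aS mem[OF that]] by (simp add: inner_vec_def)
  have aneg: "a $ i \<le> 0" for i
  proof (rule ccontr)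
    assume "\<not> a $ i \<le> 0"
    then have ai: "a $ i > 0" by simp
    define B where "B = (\<Sum>k\<in>UNIV. a $ k * (g kz k - (v * p k + 1)))"
    define t where "t = (\<bar>B\<bar> + 1) / a $ i"
    have t0: "t > 0" unfolding t_def using ai by simp
    define c where "c = (\<chi> k. v * p k + 1 + (if k = i then t else 0))"
    have "\<forall>k. c $ k > v * p k" unfolding c_def using t0 by auto
    from ineq[OF ne this]
    have "0 \<le> (\<Sum>k\<in>UNIV. a $ k * (g kz k - (v * p k + 1)) - (if k = i then a $ i * t else 0))"
      unfolding c_def by (simp add: algebra_simps if_distrib cong: if_cong)
    also have "\<dots> = B - a $ i * t" unfolding B_def by (simp add: sum_subtractf)
    also have "\<dots> = B - (\<bar>B\<bar> + 1)" unfolding t_def using ai by simp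
    finally show False by linarith
  qed
  define w where "w i = - (a $ i)" for i
  have w0: "\<forall>i. w i \<ge> 0" unfolding w_def using aneg by (simp add: le_minus_iff)
  have wpos: "\<exists>i. w i > 0"
  proof -
    obtain i where "a $ i \<noteq> 0" using a0 by (auto simp: vec_eq_iff)
    then show ?thesis using aneg[of i] unfolding w_def by (intro exI[of _ i]) simp
  qed
  have bnd: "(\<Sum>i\<in>UNIV. w i * g k i) \<le> v * (\<Sum>i\<in>UNIV. w i * p i)" if kA: "k \<in> A" for k
  proof (rule field_le_epsilon)
    fix e :: real assume e: "e > 0"
    define W where "W = (\<Sum>i\<in>UNIV. w i)"
    have W0: "W \<ge> 0" unfolding W_def using w0 by (simp add: sum_nonneg)
    define e' where "e' = e / (W + 1)"
    have e'0: "e' > 0" unfolding e'_def using e W0 by simp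
    define c where "c = (\<chi> k. v * p k + e')"
    have "\<forall>i. c $ i > v * p i" unfolding c_def using e'0 by simp
    from ineq[OF kA this]
    have "0 \<le> (\<Sum>i\<in>UNIV. w i * (v * p i + e') - w i * g k i)"
      unfolding c_def w_def by (simp add: algebra_simps)
    then have "(\<Sum>i\<in>UNIV. w i * g k i) \<le> v * (\<Sum>i\<in>UNIV. w i * p i) + e' * W"
      unfolding W_def by (simp add: sum_subtractf sum.distrib sum_distrib_left algebra_simps)
    also have "e' * W \<le> e"
    proof -
      have "e' * W = e * (W / (W + 1))" unfolding e'_def by simp
      also have "\<dots> \<le> e * 1" using e W0 by (intro mult_left_mono) auto
      finally show ?thesis by simp
    qed
    finally show "(\<Sum>i\<in>UNIV. w i * g k i) \<le> v * (\<Sum>i\<in>UNIV. w i * p i) + e" by simp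
  qed
  show ?thesis using w0 wpos bnd by blast
qed


lemma sum_E_univ:
  assumes "\<And>j. \<not> P j \<Longrightarrow> f j = (0::real)"
  shows "(\<Sum>j\<in>{j::'j::finite. P j}. f j) = (\<Sum>j\<in>UNIV. f j)"
  by (rule sum.mono_neutral_left) (auto simp: assms)

lemma dep_props:
  fixes E :: "('i::finite \<times> 'j::finite) set"
  assumes wc: "wc_policy E Nn z" and mp: "\<And>i j. (i, j) \<in> E \<Longrightarrow> mun i j > 0"
  shows "dep_rate mun z x i \<ge> 0"
    and "x i = 0 \<Longrightarrow> dep_rate mun z x i = 0"
    and "dep_rate mun z x i \<le> (\<Sum>i\<in>UNIV. \<Sum>j\<in>UNIV. \<bar>mun i j\<bar> * real (Nn j))"
proof -
  have w: "wc_action E Nn x (z x)" using wc unfolding wc_policy_def by blast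
  then have off: "\<And>i j. (i, j) \<notin> E \<Longrightarrow> z x i j = 0" and row: "\<And>i. (\<Sum>j\<in>UNIV. z x i j) \<le> x i"
    and col: "\<And>j. (\<Sum>i\<in>UNIV. z x i j) \<le> Nn j"
    unfolding wc_action_def by auto
  have t: "mun i j * real (z x i j) \<ge> 0" for j
    using mp[of i j] off[of i j] by (cases "(i, j) \<in> E") auto
  show "dep_rate mun z x i \<ge> 0" unfolding dep_rate_def using t by (simp add: sum_nonneg)
  show "x i = 0 \<Longrightarrow> dep_rate mun z x i = 0"
  proof -
    assume "x i = 0"
    then have "(\<Sum>j\<in>UNIV. z x i j) = 0" using row[of i] by simp
    then have "z x i j = 0" for j by simp
    then show ?thesis unfolding dep_rate_def by simp
  qed
  have zb: "z x i j \<le> Nn j" for j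
  proof -
    have "z x i j \<le> (\<Sum>i\<in>UNIV. z x i j)" by (rule member_le_sum) auto
    then show ?thesis using col[of j] by linarith
  qed
  have "dep_rate mun z x i \<le> (\<Sum>j\<in>UNIV. \<bar>mun i j\<bar> * real (Nn j))"
    unfolding dep_rate_def
  proof (rule sum_mono)
    fix j
    have "mun i j * real (z x i j) \<le> \<bar>mun i j\<bar> * real (z x i j)" by (intro mult_right_mono) auto
    also have "\<dots> \<le> \<bar>mun i j\<bar> * real (Nn j)" using zb[of j] by (intro mult_left_mono) auto
    finally show "mun i j * real (z x i j) \<le> \<bar>mun i j\<bar> * real (Nn j)" .
  qed
  also have "\<dots> \<le> (\<Sum>i\<in>UNIV. \<Sum>j\<in>UNIV. \<bar>mun i j\<bar> * real (Nn j))"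
    by (rule member_le_sum[of i UNIV "\<lambda>i. \<Sum>j\<in>UNIV. \<bar>mun i j\<bar> * real (Nn j)"]) (auto intro: sum_nonneg)
  finally show "dep_rate mun z x i \<le> (\<Sum>i\<in>UNIV. \<Sum>j\<in>UNIV. \<bar>mun i j\<bar> * real (Nn j))" .
qed

lemma tree_nb:
  assumes "bip_tree (E :: ('i \<times> 'j) set)"
  shows "\<exists>i. (i, j) \<in> E"
proof -
  have "(Inr j, Inl undefined) \<in> {(a, b). bip_adj E a b}\<^sup>*" using assms unfolding bip_tree_def by blast
  then show ?thesis
  proof (cases rule: converse_rtranclE)
    case base then show ?thesis by simp
  next
    case (step y)
    then show ?thesis unfolding bip_adj_def by auto
  qed
qed

theorem theorem6:
  fixes E :: "('i::finite \<times> 'j::finite) set"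
    and lam :: "nat \<Rightarrow> 'i \<Rightarrow> real" and mu :: "nat \<Rightarrow> 'i \<Rightarrow> 'j \<Rightarrow> real" and N :: "nat \<Rightarrow> 'j \<Rightarrow> nat"
    and lam0 :: "'i \<Rightarrow> real" and mu0 :: "'i \<Rightarrow> 'j \<Rightarrow> real" and nu :: "'j \<Rightarrow> real"
    and \<xi>s :: "'i \<Rightarrow> 'j \<Rightarrow> real"
    and n :: nat and p :: "'i \<Rightarrow> real" and v :: real
  assumes tree: "bip_tree E"
    and lam_pos: "\<And>m i. lam m i > 0"
    and mu_pos: "\<And>m i j. (i, j) \<in> E \<Longrightarrow> mu m i j > 0"
    and N_pos: "\<And>m j. m \<ge> 1 \<Longrightarrow> N m j \<ge> 1"
    and lam_lim: "\<And>i. (\<lambda>m. lam m i / real m) \<longlonglongrightarrow> lam0 i" and lam0_pos: "\<And>i. lam0 i > 0"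
    and N_lim: "\<And>j. (\<lambda>m. real (N m j) / real m) \<longlonglongrightarrow> nu j" and nu_pos: "\<And>j. nu j > 0"
    and mu_lim: "\<And>i j. (i, j) \<in> E \<Longrightarrow> (\<lambda>m. mu m i j) \<longlonglongrightarrow> mu0 i j"
    and mu0_pos: "\<And>i j. (i, j) \<in> E \<Longrightarrow> mu0 i j > 0"
    and lamhat_conv: "\<And>i. convergent (\<lambda>m. lamhat lam lam0 m i)"
    and muhat_conv: "\<And>i j. (i, j) \<in> E \<Longrightarrow> convergent (\<lambda>m. muhat mu mu0 m i j)"
    and nuhat_conv: "\<And>j. convergent (\<lambda>m. nuhat N nu m j)"
    and crp: "crp_unique_solution E lam0 mu0 nu \<xi>s"
    and n_pos: "n \<ge> 1"
    and p_pos: "\<And>i. p i > 0" and p_sum: "(\<Sum>i\<in>UNIV. p i) = 1"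
    and v_opt: "vtheta_opt_value E lam lam0 mu mu0 N nu \<xi>s n p v"
  shows "(v < 0 \<longrightarrow> (\<forall>z. wc_policy E (N n) z \<longrightarrow>
              (\<forall>x. transient_state (lam n) (dep_rate (mu n) z) x)))
       \<and> (v = 0 \<longrightarrow> (\<forall>z. wc_policy E (N n) z \<longrightarrow>
              (\<forall>x. \<not> pos_recurrent_state (lam n) (dep_rate (mu n) z) x)))"
proof -
  define sq where "sq = sqrt (real n)"
  have sq0: "sq > 0" unfolding sq_def using n_pos by simp
  have nsq: "real n = sq * sq" unfolding sq_def by simp
  define th where "th j = theta E mu mu0 N nu \<xi>s n j" for j
  define A where "A = {\<kappa> :: 'i \<Rightarrow> 'j \<Rightarrow> real. (\<forall>i j. (i, j) \<notin> E \<longrightarrow> \<kappa> i j = 0) \<and>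
                         (\<forall>j. (\<Sum>i\<in>{i. (i, j) \<in> E}. \<kappa> i j) = th j)}"
  define g where "g \<kappa> i = (\<Sum>j\<in>{j. (i, j) \<in> E}. mu n i j * \<kappa> i j) - lamhat lam lam0 n i" for \<kappa> i
  define cmb where "cmb u k1 k2 = (\<lambda>i j. u * k1 i j + (1 - u) * k2 i j)" for u and k1 k2 :: "'i \<Rightarrow> 'j \<Rightarrow> real"
  have feasA: "vtheta_feasible E lam lam0 mu mu0 N nu \<xi>s n p vt \<kappa> \<longleftrightarrow> \<kappa> \<in> A \<and> (\<forall>i. vt * p i \<le> g \<kappa> i)" for vt \<kappa>
    unfolding vtheta_feasible_def A_def g_def th_def by (auto simp: algebra_simps)
  obtain w where w0: "\<forall>i. w i \<ge> 0" and wpos: "\<exists>i. w i > 0"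
    and wb: "\<forall>k\<in>A. (\<Sum>i\<in>UNIV. w i * g k i) \<le> v * (\<Sum>i\<in>UNIV. w i * p i)"
  proof -
    obtain k0 where "vtheta_feasible E lam lam0 mu mu0 N nu \<xi>s n p v k0"
      using v_opt unfolding vtheta_opt_value_def by blast
    then have k0: "k0 \<in> A" using feasA by blast
    have "\<exists>w. (\<forall>i. w i \<ge> 0) \<and> (\<exists>i. w i > 0) \<and> (\<forall>k\<in>A. (\<Sum>i\<in>UNIV. w i * g k i) \<le> v * (\<Sum>i\<in>UNIV. w i * p i))"
    proof (rule sep_lemma[where cmb = cmb and kz = k0])
      show "cmb u k1 k2 \<in> A" if "k1 \<in> A" "k2 \<in> A" for k1 k2 u
      proof -
        have "(\<Sum>i\<in>{i. (i, j) \<in> E}. u * k1 i j + (1 - u) * k2 i j) = th j" for j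
        proof -
          have "(\<Sum>i\<in>{i. (i, j) \<in> E}. u * k1 i j + (1 - u) * k2 i j)
              = u * (\<Sum>i\<in>{i. (i, j) \<in> E}. k1 i j) + (1 - u) * (\<Sum>i\<in>{i. (i, j) \<in> E}. k2 i j)"
            by (simp add: sum.distrib sum_distrib_left)
          then show ?thesis using that unfolding A_def by (simp add: algebra_simps)
        qed
        then show ?thesis using that unfolding A_def cmb_def by auto
      qed
      show "g (cmb u k1 k2) i = u * g k1 i + (1 - u) * g k2 i" for k1 k2 u i
        unfolding g_def cmb_def
        by (simp add: sum.distrib sum_distrib_left algebra_simps sum_subtractf)
      show "k0 \<in> A" by (rule k0)
      show "vt \<le> v" if "k \<in> A" "\<forall>i. vt * p i \<le> g k i" for vt k
        using v_opt that feasA unfolding vtheta_opt_value_def by blast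
      show "p i > 0" for i by (rule p_pos)
    qed
    then show ?thesis using that by blast
  qed
  have crpF: "crp_feasible E lam0 mu0 nu \<xi>s" and csum: "\<And>j. (\<Sum>i\<in>UNIV. \<xi>s i j) = 1"
    using crp unfolding crp_unique_solution_def by auto
  have xoff: "\<And>i j. (i, j) \<notin> E \<Longrightarrow> \<xi>s i j = 0"
    and rsum: "\<And>i. (\<Sum>j \<in> {j. (i, j) \<in> E}. mu0 i j * nu j * \<xi>s i j) = lam0 i"
    using crpF unfolding crp_feasible_def by auto
  obtain nb where nb: "\<And>j. (nb j, j) \<in> E" using tree_nb[OF tree] by metis
  define Wp where "Wp = (\<Sum>i\<in>UNIV. w i * p i)"
  have drift: "(\<Sum>i\<in>UNIV. w i * (lam n i - dep_rate (mu n) z x i)) \<ge> - (sq * v * Wp)"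
    if wcp: "wc_policy E (N n) z" for z x
  proof -
    define Z where "Z i j = z x i j" for i j
    have wa: "wc_action E (N n) x (z x)" using wcp unfolding wc_policy_def by blast
    have off: "\<And>i j. (i, j) \<notin> E \<Longrightarrow> Z i j = 0" and col: "\<And>j. (\<Sum>i\<in>UNIV. Z i j) \<le> N n j"
      using wa unfolding wc_action_def Z_def by auto
    define zs where "zs i j = \<xi>s i j * nu j" for i j
    define sl where "sl j = real (N n j) - real (\<Sum>i\<in>UNIV. Z i j)" for j
    have sl0: "sl j \<ge> 0" for j
    proof -
      have "real (\<Sum>i\<in>UNIV. Z i j) \<le> real (N n j)" using col[of j] by (simp only: of_nat_le_iff)
      then show ?thesis unfolding sl_def by linarith
    qed
    define z' where "z' i j = real (Z i j) + (if i = nb j then sl j else 0)" for i j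
    have z'off: "(i, j) \<notin> E \<Longrightarrow> z' i j = 0" for i j
      unfolding z'_def using off[of i j] nb[of j] by auto
    have z'ge: "real (Z i j) \<le> z' i j" for i j unfolding z'_def using sl0[of j] by simp
    define \<kappa> where "\<kappa> i j = (if (i, j) \<in> E then (z' i j - real n * zs i j) / sq
                                 + (muhat mu mu0 n i j / mu n i j) * zs i j else 0)" for i j
    have colz': "(\<Sum>i\<in>{i. (i, j) \<in> E}. z' i j) = real (N n j)" for j
    proof -
      have "(\<Sum>i\<in>{i. (i, j) \<in> E}. z' i j) = (\<Sum>i\<in>UNIV. z' i j)"
        by (rule sum_E_univ) (simp add: z'off)
      also have "\<dots> = (\<Sum>i\<in>UNIV. real (Z i j)) + sl j"
        unfolding z'_def by (simp add: sum.distrib)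
      finally show ?thesis unfolding sl_def by simp
    qed
    have colzs: "(\<Sum>i\<in>{i. (i, j) \<in> E}. zs i j) = nu j" for j
    proof -
      have "(\<Sum>i\<in>{i. (i, j) \<in> E}. zs i j) = (\<Sum>i\<in>UNIV. zs i j)"
        by (rule sum_E_univ) (simp add: zs_def xoff)
      also have "\<dots> = nu j" unfolding zs_def using csum[of j] by (simp add: sum_distrib_right[symmetric])
      finally show ?thesis .
    qed
    have kA: "\<kappa> \<in> A"
      unfolding A_def
    proof (intro CollectI conjI allI impI)
      show "\<kappa> i j = 0" if "(i, j) \<notin> E" for i j using that unfolding \<kappa>_def by simp
      fix j
      have "(\<Sum>i\<in>{i. (i, j) \<in> E}. \<kappa> i j)
          = (\<Sum>i\<in>{i. (i, j) \<in> E}. z' i j / sq - real n / sq * zs i j + (muhat mu mu0 n i j / mu n i j) * zs i j)"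
        unfolding \<kappa>_def by (intro sum.cong refl) (simp add: diff_divide_distrib)
      also have "\<dots> = (\<Sum>i\<in>{i. (i, j) \<in> E}. z' i j) / sq - real n / sq * (\<Sum>i\<in>{i. (i, j) \<in> E}. zs i j)
                     + (\<Sum>i\<in>{i. (i, j) \<in> E}. (muhat mu mu0 n i j / mu n i j) * zs i j)"
        by (simp add: sum.distrib sum_subtractf sum_divide_distrib sum_distrib_left)
      also have "\<dots> = th j"
      proof -
        have "real (N n j) / sq - real n / sq * nu j = nuhat N nu n j"
          unfolding nuhat_def using sq0 n_pos by (simp add: nsq field_simps)
        moreover have "(\<Sum>i\<in>{i. (i, j) \<in> E}. (muhat mu mu0 n i j / mu n i j) * zs i j)
            = (\<Sum>i\<in>{i. (i, j) \<in> E}. (muhat mu mu0 n i j / mu n i j) * (\<xi>s i j * nu j))"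
          by (simp add: zs_def)
        ultimately show ?thesis unfolding colz' colzs th_def theta_def by simp
      qed
      finally show "(\<Sum>i\<in>{i. (i, j) \<in> E}. \<kappa> i j) = th j" .
    qed
    have gk: "g \<kappa> i = ((\<Sum>j\<in>{j. (i, j) \<in> E}. mu n i j * z' i j) - lam n i) / sq" for i
    proof -
      have t: "mu n i j * \<kappa> i j = mu n i j * z' i j / sq - sq * (mu0 i j * nu j * \<xi>s i j)"
        if "(i, j) \<in> E" for j
      proof -
        have m0: "mu n i j \<noteq> 0" using mu_pos[OF that, of n] by simp
        show ?thesis unfolding \<kappa>_def muhat_def zs_def using that m0 sq0
          by (simp add: nsq field_simps)
      qed
      have "(\<Sum>j\<in>{j. (i, j) \<in> E}. mu n i j * \<kappa> i j)
          = (\<Sum>j\<in>{j. (i, j) \<in> E}. mu n i j * z' i j / sq - sq * (mu0 i j * nu j * \<xi>s i j))"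
        by (intro sum.cong refl) (simp add: t)
      also have "\<dots> = (\<Sum>j\<in>{j. (i, j) \<in> E}. mu n i j * z' i j) / sq - sq * lam0 i"
        by (simp add: sum_subtractf sum_divide_distrib sum_distrib_left[symmetric] rsum)
      finally show ?thesis unfolding g_def lamhat_def using sq0 by (simp add: nsq field_simps)
    qed
    have "(\<Sum>i\<in>UNIV. w i * g \<kappa> i) \<le> v * Wp" using wb kA unfolding Wp_def by blast
    then have "(\<Sum>i\<in>UNIV. w i * ((\<Sum>j\<in>{j. (i, j) \<in> E}. mu n i j * z' i j) - lam n i)) / sq \<le> v * Wp"
      unfolding gk by (simp add: sum_divide_distrib)
    then have B: "(\<Sum>i\<in>UNIV. w i * ((\<Sum>j\<in>{j. (i, j) \<in> E}. mu n i j * z' i j) - lam n i)) \<le> sq * v * Wp"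
      using sq0 by (simp add: divide_le_eq mult.commute mult.left_commute)
    have dep: "dep_rate (mu n) z x i \<le> (\<Sum>j\<in>{j. (i, j) \<in> E}. mu n i j * z' i j)" for i
    proof -
      have "dep_rate (mu n) z x i = (\<Sum>j\<in>{j. (i, j) \<in> E}. mu n i j * real (Z i j))"
        unfolding dep_rate_def Z_def by (rule sum_E_univ[symmetric]) (simp add: off[unfolded Z_def])
      also have "\<dots> \<le> (\<Sum>j\<in>{j. (i, j) \<in> E}. mu n i j * z' i j)"
        by (intro sum_mono mult_left_mono z'ge) (auto intro: less_imp_le mu_pos)
      finally show ?thesis .
    qed
    have "- (sq * v * Wp) \<le> (\<Sum>i\<in>UNIV. - (w i * ((\<Sum>j\<in>{j. (i, j) \<in> E}. mu n i j * z' i j) - lam n i)))"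
      using B by (simp add: sum_negf)
    also have "\<dots> \<le> (\<Sum>i\<in>UNIV. w i * (lam n i - dep_rate (mu n) z x i))"
      using w0 dep by (intro sum_mono) (simp add: mult_left_mono algebra_simps)
    finally show ?thesis .
  qed
  obtain i0 where i0: "w i0 > 0" using wpos by blast
  have Wp0: "Wp > 0"
  proof -
    have "w i0 * p i0 \<le> Wp" unfolding Wp_def
      by (rule member_le_sum) (auto intro: mult_nonneg_nonneg w0[rule_format] less_imp_le p_pos)
    moreover have "w i0 * p i0 > 0" using i0 p_pos[of i0] by simp
    ultimately show ?thesis by linarith
  qed
  define D where "D = (\<Sum>i\<in>UNIV. \<Sum>j\<in>UNIV. \<bar>mu n i j\<bar> * real (N n j))"
  have loc: "mcw (lam n) (dep_rate (mu n) z) w (- (sq * v * Wp))" if wcp: "wc_policy E (N n) z" for z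
    by unfold_locales
      (auto intro: lam_pos w0[rule_format] dep_props[OF wcp mu_pos] drift[OF wcp])
  show ?thesis
  proof (intro conjI impI allI)
    fix z x assume vn: "v < 0" and wcp: "wc_policy E (N n) z"
    interpret mcw "lam n" "dep_rate (mu n) z" w "- (sq * v * Wp)" by (rule loc[OF wcp])
    show "transient_state (lam n) (dep_rate (mu n) z) x"
    proof (rule transient_thm)
      show "- (sq * v * Wp) > 0" using vn sq0 Wp0 by (simp add: mult_pos_neg mult_neg_pos)
      show "dep_rate (mu n) z y i \<le> D" for y i unfolding D_def by (rule dep_props(3)[OF wcp mu_pos])
      show "w i0 > 0" by (rule i0)
    qed
  next
    fix z x assume vn: "v = 0" and wcp: "wc_policy E (N n) z"
    interpret mcw "lam n" "dep_rate (mu n) z" w "- (sq * v * Wp)" by (rule loc[OF wcp])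
    show "\<not> pos_recurrent_state (lam n) (dep_rate (mu n) z) x"
    proof (rule notpos_thm)
      show "- (sq * v * Wp) \<ge> 0" using vn by simp
      show "dep_rate (mu n) z y i \<le> D" for y i unfolding D_def by (rule dep_props(3)[OF wcp mu_pos])
      show "w i0 > 0" by (rule i0)
    qed
  qed
qed
end
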